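(* For all terms $M,M'$ and every substitution $\sigma$: if $M\sim_\alpha M'$ then $M\bullet\sigma\equiv M'\bullet\sigma$.
   Context: Let $\mathcal V$ (the variables) be a type with decidable equality, equipped with functions $\mathrm{encode}:\mathcal V\to\mathbb N$ and $\mathrm{decode}:\mathbb N\to\mathcal V$ such that $\mathrm{encode}(\mathrm{decode}\,n)=n$ for all $n$. Let $\mathcal C$ (the constants) be any type. Terms $\Lambda$ are generated by: $c\,k$ ($k\in\mathcal C$), $v\,x$ ($x\in\mathcal V$), $\lambda[x:A]M$, $\Pi[x:A]B$ and $M\cdot N$; in $\lambda[x:A]M$ and $\Pi[x:A]B$ the name $x$ binds in $M$ (resp. $B$) but not in $A$. Terms are raw first-order syntax (not identified up to renaming of bound variables) and $\equiv$ denotes syntactic identity. The list of free variables is $\mathrm{fv}(c\,k)=[\,]$, $\mathrm{fv}(v\,x)=[x]$, $\mathrm{fv}(\lambda[x:A]M)=\mathrm{fv}\,A\mathbin{+\!\!+}(\mathrm{fv}\,M-x)$, $\mathrm{fv}(\Pi[x:A]B)=\mathrm{fv}\,A\mathbin{+\!\!+}(\mathrm{fv}\,B-x)$, $\mathrm{fv}(M\cdot N)=\mathrm{fv}\,M\mathbin{+\!\!+}\mathrm{fv}\,N$, where $\mathbin{+\!\!+}$ is list concatenation and $xs-x$ deletes every occurrence of $x$ from $xs$. Fix a function $\chi':\mathrm{List}\,\mathbb N\to\mathbb N$ with $\chi'(ns)\notin ns$ for every list $ns$, and put $X'(xs)=\mathrm{decode}(\chi'(\mathrm{map}\ \mathrm{encode}\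 xs))$. A substitution is any function $\sigma:\mathcal V\to\Lambda$; $\iota=v$ is the identity substitution; $(\sigma,x:=N)(y)=N$ if $y=x$ and $\sigma\,y$ otherwise. For a substitution $\sigma$ and a list $xs$ of variables, $X(\sigma,xs)=X'(\text{concatenation of the lists }\mathrm{fv}(\sigma\,y)\text{ for }y\in xs)$. The action $M\bullet\sigma$ is defined by structural recursion: $c\,k\bullet\sigma=c\,k$; $v\,x\bullet\sigma=\sigma\,x$; $(M\cdot N)\bullet\sigma=(M\bullet\sigma)\cdot(N\bullet\sigma)$; $(\lambda[x:A]M)\bullet\sigma=\lambda[y:A\bullet\sigma](M\bullet(\sigma,x:=v\,y))$ with $y=X(\sigma,\mathrm{fv}\,M-x)$; $(\Pi[x:A]B)\bullet\sigma=\Pi[y:A\bullet\sigma](B\bullet(\sigma,x:=v\,y))$ with $y=X(\sigma,\mathrm{fv}\,B-x)$. Unary substitution is $M[x:=N]=M\bullet(\iota,x:=N)$. $\alpha$-conversion $\sim_\alpha$ is the inductively defined relation with rules: $c\,k\sim_\alpha c\,k$; $v\,x\sim_\alpha v\,x$; $M\cdot N\sim_\alpha M'\cdot N'$ if $M\sim_\alpha M'$ and $N\sim_\alpha N'$; $\lambda[x:A]M\sim_\alpha\lambda[x':A']M'$ if $A\sim_\alpha A'$ and there is a variable $y$ with $y\notin\mathrm{fv}\,M-x$, $y\notin\mathrm{fv}\,M'-x'$ and $M[x:=v\,y]\equiv M'[x':=v\,y]$; and the same rule with $\Pi$ in place of $\lambda$. *)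

theory Defs
  imports Main
begin

datatype ('c, 'v) trm =
    Con 'c
  | Var 'v
  | Lam 'v "('c, 'v) trm" "('c, 'v) trm"   (* Lam x A M  =  lambda[x:A] M *)
  | Pi 'v "('c, 'v) trm" "('c, 'v) trm"    (* Pi x A B   =  Pi[x:A] B *)
  | App "('c, 'v) trm" "('c, 'v) trm"

primrec fv :: "('c, 'v) trm \<Rightarrow> 'v list" where
  "fv (Con k) = []"
| "fv (Var x) = [x]"
| "fv (Lam x A M) = fv A @ removeAll x (fv M)"
| "fv (Pi x A B) = fv A @ removeAll x (fv B)"
| "fv (App M N) = fv M @ fv N"

definition Xp :: "('v \<Rightarrow> nat) \<Rightarrow> (nat \<Rightarrow> 'v) \<Rightarrow> (nat list \<Rightarrow> nat) \<Rightarrow> 'v list \<Rightarrow> 'v" where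
  "Xp enc dec chi xs = dec (chi (map enc xs))"

definition Xs :: "('v \<Rightarrow> nat) \<Rightarrow> (nat \<Rightarrow> 'v) \<Rightarrow> (nat list \<Rightarrow> nat) \<Rightarrow> ('v \<Rightarrow> ('c, 'v) trm) \<Rightarrow> 'v list \<Rightarrow> 'v" where
  "Xs enc dec chi \<sigma> xs = Xp enc dec chi (concat (map (\<lambda>y. fv (\<sigma> y)) xs))"

definition upd :: "('v \<Rightarrow> ('c, 'v) trm) \<Rightarrow> 'v \<Rightarrow> ('c, 'v) trm \<Rightarrow> 'v \<Rightarrow> ('c, 'v) trm" where
  "upd \<sigma> x N = (\<lambda>y. if y = x then N else \<sigma> y)"

primrec act :: "('v \<Rightarrow> nat) \<Rightarrow> (nat \<Rightarrow> 'v) \<Rightarrow> (nat list \<Rightarrow> nat) \<Rightarrow> ('c, 'v) trm \<Rightarrow> ('v \<Rightarrow> ('c, 'v) trm) \<Rightarrow> ('c, 'v) trm" where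
  "act enc dec chi (Con k) \<sigma> = Con k"
| "act enc dec chi (Var x) \<sigma> = \<sigma> x"
| "act enc dec chi (App M N) \<sigma> = App (act enc dec chi M \<sigma>) (act enc dec chi N \<sigma>)"
| "act enc dec chi (Lam x A M) \<sigma> =
     (let y = Xs enc dec chi \<sigma> (removeAll x (fv M))
      in Lam y (act enc dec chi A \<sigma>) (act enc dec chi M (upd \<sigma> x (Var y))))"
| "act enc dec chi (Pi x A B) \<sigma> =
     (let y = Xs enc dec chi \<sigma> (removeAll x (fv B))
      in Pi y (act enc dec chi A \<sigma>) (act enc dec chi B (upd \<sigma> x (Var y))))"

definition usubst :: "('v \<Rightarrow> nat) \<Rightarrow> (nat \<Rightarrow> 'v) \<Rightarrow> (nat list \<Rightarrow> nat) \<Rightarrow> ('c, 'v) trm \<Rightarrow> 'v \<Rightarrow> ('c, 'v) trm \<Rightarrow> ('c, 'v) trm" where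
  "usubst enc dec chi M x N = act enc dec chi M (upd Var x N)"

inductive alpha :: "('v \<Rightarrow> nat) \<Rightarrow> (nat \<Rightarrow> 'v) \<Rightarrow> (nat list \<Rightarrow> nat) \<Rightarrow> ('c, 'v) trm \<Rightarrow> ('c, 'v) trm \<Rightarrow> bool"
  for enc dec chi where
  alpha_con: "alpha enc dec chi (Con k) (Con k)"
| alpha_var: "alpha enc dec chi (Var x) (Var x)"
| alpha_app: "\<lbrakk>alpha enc dec chi M M'; alpha enc dec chi N N'\<rbrakk> \<Longrightarrow> alpha enc dec chi (App M N) (App M' N')"
| alpha_lam: "\<lbrakk>alpha enc dec chi A A'; y \<notin> set (removeAll x (fv M)); y \<notin> set (removeAll x' (fv M'));
               usubst enc dec chi M x (Var y) = usubst enc dec chi M' x' (Var y)\<rbrakk>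
              \<Longrightarrow> alpha enc dec chi (Lam x A M) (Lam x' A' M')"
| alpha_pi: "\<lbrakk>alpha enc dec chi A A'; y \<notin> set (removeAll x (fv B)); y \<notin> set (removeAll x' (fv B'));
               usubst enc dec chi B x (Var y) = usubst enc dec chi B' x' (Var y)\<rbrakk>
              \<Longrightarrow> alpha enc dec chi (Pi x A B) (Pi x' A' B')"

end

theory Submission
  imports Defs
begin

lemma removeAll_concat_upd:
  assumes "\<forall>v\<in>set l. v \<noteq> x \<longrightarrow> z \<notin> set (fv (\<sigma> v))"
  shows "removeAll z (concat (map (\<lambda>v. fv (upd \<sigma> x (Var z) v)) l))
         = concat (map (\<lambda>v. fv (\<sigma> v)) (removeAll x l))"
  using assms by (induction l) (auto simp: upd_def)

lemma concat_map_rename: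
  "concat (map (\<lambda>v. fv (if v = x then Var y else (Var v :: ('c,'v) trm))) l)
   = map (\<lambda>v. if v = x then y else v) l"
  by (induction l) auto

lemma removeAll_map_rename:
  assumes "y \<notin> set (removeAll x l)"
  shows "removeAll y (map (\<lambda>v. if v = x then y else v) l) = removeAll x l"
  using assms by (induction l) auto

context
  fixes enc :: "'v \<Rightarrow> nat" and dec :: "nat \<Rightarrow> 'v" and chi :: "nat list \<Rightarrow> nat"
  assumes enc_dec: "\<And>n. enc (dec n) = n"
    and chi_fresh: "\<And>ns. chi ns \<notin> set ns"
begin

lemma Xs_fresh:
  assumes "v \<in> set xs"
  shows "Xs enc dec chi (\<sigma> :: 'v \<Rightarrow> ('c, 'v) trm) xs \<notin> set (fv (\<sigma> v))"
proof
  let ?l = "concat (map (\<lambda>y. fv (\<sigma> y)) xs)"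
  assume h: "Xs enc dec chi \<sigma> xs \<in> set (fv (\<sigma> v))"
  hence "dec (chi (map enc ?l)) \<in> set ?l" using assms by (auto simp: Xs_def Xp_def)
  hence "enc (dec (chi (map enc ?l))) \<in> set (map enc ?l)" by auto
  thus False using enc_dec chi_fresh by metis
qed

lemma act_agree:
  "(\<forall>v\<in>set (fv M). \<sigma> v = \<sigma>' v) \<Longrightarrow> act enc dec chi M \<sigma> = act enc dec chi M \<sigma>'"
proof (induction M arbitrary: \<sigma> \<sigma>')
  case (Lam x A M)
  have e: "Xs enc dec chi \<sigma> (removeAll x (fv M)) = Xs enc dec chi \<sigma>' (removeAll x (fv M))"
    unfolding Xs_def using Lam.prems by (auto intro!: arg_cong[where f="Xp enc dec chi"] arg_cong[where f=concat])
  show ?case using Lam.prems Lam.IH e by (auto simp: Let_def upd_def)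
next
  case (Pi x A M)
  have e: "Xs enc dec chi \<sigma> (removeAll x (fv M)) = Xs enc dec chi \<sigma>' (removeAll x (fv M))"
    unfolding Xs_def using Pi.prems by (auto intro!: arg_cong[where f="Xp enc dec chi"] arg_cong[where f=concat])
  show ?case using Pi.prems Pi.IH e by (auto simp: Let_def upd_def)
qed auto

lemma fv_act:
  "fv (act enc dec chi M \<sigma>) = concat (map (\<lambda>v. fv (\<sigma> v)) (fv M))"
proof (induction M arbitrary: \<sigma>)
  case (Lam x A M)
  let ?z = "Xs enc dec chi \<sigma> (removeAll x (fv M))"
  have "\<forall>v\<in>set (fv M). v \<noteq> x \<longrightarrow> ?z \<notin> set (fv (\<sigma> v))"
    using Xs_fresh[of _ "removeAll x (fv M)" \<sigma>] by auto
  then show ?case using Lam.IH by (simp add: Let_def removeAll_concat_upd)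
next
  case (Pi x A M)
  let ?z = "Xs enc dec chi \<sigma> (removeAll x (fv M))"
  have "\<forall>v\<in>set (fv M). v \<noteq> x \<longrightarrow> ?z \<notin> set (fv (\<sigma> v))"
    using Xs_fresh[of _ "removeAll x (fv M)" \<sigma>] by auto
  then show ?case using Pi.IH by (simp add: Let_def removeAll_concat_upd)
qed auto


lemma concat_map_fv_comp:
  "concat (map (\<lambda>v. fv (\<tau> v)) (concat (map (\<lambda>v. fv (\<sigma> v)) l)))
   = concat (map (\<lambda>v. fv (act enc dec chi (\<sigma> v) \<tau>)) l)"
  by (induction l) (simp_all add: fv_act)

lemma act_comp_Lam_var:
  assumes "\<forall>v\<in>set (removeAll x (fv M)). z \<notin> set (fv (\<sigma> v))"
  shows "Xs enc dec chi \<tau> (removeAll z (fv (act enc dec chi M (upd \<sigma> x (Var z)))))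
       = Xs enc dec chi (\<lambda>v. act enc dec chi (\<sigma> v) \<tau>) (removeAll x (fv M))"
proof -
  have "removeAll z (fv (act enc dec chi M (upd \<sigma> x (Var z))))
      = concat (map (\<lambda>v. fv (\<sigma> v)) (removeAll x (fv M)))"
    using assms by (simp add: fv_act removeAll_concat_upd)
  thus ?thesis by (simp add: Xs_def concat_map_fv_comp)
qed

lemma act_comp_body:
  assumes "\<forall>v\<in>set (removeAll x (fv M)). z \<notin> set (fv (\<sigma> v))"
  shows "act enc dec chi M (\<lambda>v. act enc dec chi (upd \<sigma> x (Var z) v) (upd \<tau> z (Var w)))
       = act enc dec chi M (upd (\<lambda>v. act enc dec chi (\<sigma> v) \<tau>) x (Var w))"
proof (rule act_agree, intro ballI)
  fix v assume v: "v \<in> set (fv M)"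
  show "act enc dec chi (upd \<sigma> x (Var z) v) (upd \<tau> z (Var w))
       = upd (\<lambda>v. act enc dec chi (\<sigma> v) \<tau>) x (Var w) v"
  proof (cases "v = x")
    case True thus ?thesis by (simp add: upd_def)
  next
    case False
    hence "z \<notin> set (fv (\<sigma> v))" using assms v by auto
    hence "act enc dec chi (\<sigma> v) (upd \<tau> z (Var w)) = act enc dec chi (\<sigma> v) \<tau>"
      by (intro act_agree) (auto simp: upd_def)
    thus ?thesis using False by (simp add: upd_def)
  qed
qed

lemma act_comp:
  "act enc dec chi (act enc dec chi M \<sigma>) \<tau> = act enc dec chi M (\<lambda>v. act enc dec chi (\<sigma> v) \<tau>)"
proof (induction M arbitrary: \<sigma> \<tau>)
  case (Lam x A M)
  let ?z = "Xs enc dec chi \<sigma> (removeAll x (fv M))"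
  have fr: "\<forall>v\<in>set (removeAll x (fv M)). ?z \<notin> set (fv (\<sigma> v))"
    using Xs_fresh by blast
  show ?case using Lam.IH act_comp_Lam_var[OF fr] act_comp_body[OF fr]
    by (simp add: Let_def)
next
  case (Pi x A M)
  let ?z = "Xs enc dec chi \<sigma> (removeAll x (fv M))"
  have fr: "\<forall>v\<in>set (removeAll x (fv M)). ?z \<notin> set (fv (\<sigma> v))"
    using Xs_fresh by blast
  show ?case using Pi.IH act_comp_Lam_var[OF fr] act_comp_body[OF fr]
    by (simp add: Let_def)
qed auto

lemma fv_usubst_rm:
  assumes "y \<notin> set (removeAll x (fv M))"
  shows "removeAll y (fv (usubst enc dec chi M x (Var y))) = removeAll x (fv M)"
proof -
  have "fv (usubst enc dec chi M x (Var y)) = map (\<lambda>v. if v = x then y else v) (fv M)"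
    unfolding usubst_def fv_act upd_def by (simp add: concat_map_rename)
  thus ?thesis using removeAll_map_rename[OF assms] by simp
qed

lemma alpha_fv: "alpha enc dec chi M M' \<Longrightarrow> fv M = fv M'"
proof (induction rule: alpha.induct)
  case (alpha_lam A A' y x M x' M')
  then show ?case using fv_usubst_rm[of y x M] fv_usubst_rm[of y x' M'] by simp
next
  case (alpha_pi A A' y x B x' B')
  then show ?case using fv_usubst_rm[of y x B] fv_usubst_rm[of y x' B'] by simp
qed auto

lemma usubst_body:
  assumes "y \<notin> set (removeAll x (fv M))"
  shows "act enc dec chi M (upd \<sigma> x (Var z))
       = act enc dec chi (usubst enc dec chi M x (Var y)) (upd \<sigma> y (Var z))"
  unfolding usubst_def act_comp
proof (rule act_agree, intro ballI)
  fix v assume "v \<in> set (fv M)"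
  thus "upd \<sigma> x (Var z) v = act enc dec chi (upd Var x (Var y) v) (upd \<sigma> y (Var z))"
    using assms by (cases "v = x") (auto simp: upd_def)
qed

lemma alpha_act: "alpha enc dec chi M M' \<Longrightarrow> act enc dec chi M \<sigma> = act enc dec chi M' \<sigma>"
proof (induction arbitrary: \<sigma> rule: alpha.induct)
  case (alpha_lam A A' y x M x' M')
  have e: "removeAll x (fv M) = removeAll x' (fv M')"
    using alpha_lam alpha_fv fv_usubst_rm[of y x M] fv_usubst_rm[of y x' M'] by simp
  show ?case using alpha_lam usubst_body[of y x M] usubst_body[of y x' M'] e
    by (simp add: Let_def)
next
  case (alpha_pi A A' y x B x' B')
  have e: "removeAll x (fv B) = removeAll x' (fv B')"
    using alpha_pi alpha_fv fv_usubst_rm[of y x B] fv_usubst_rm[of y x' B'] by simp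
  show ?case using alpha_pi usubst_body[of y x B] usubst_body[of y x' B'] e
    by (simp add: Let_def)
qed auto

end

theorem mainTheorem4:
  fixes enc :: "'v \<Rightarrow> nat" and dec :: "nat \<Rightarrow> 'v" and chi :: "nat list \<Rightarrow> nat"
    and M M' :: "('c, 'v) trm" and \<sigma> :: "'v \<Rightarrow> ('c, 'v) trm"
  assumes enc_dec: "\<And>n. enc (dec n) = n"
    and chi_fresh: "\<And>ns. chi ns \<notin> set ns"
    and "alpha enc dec chi M M'"
  shows "act enc dec chi M \<sigma> = act enc dec chi M' \<sigma>"
  using alpha_act[OF enc_dec chi_fresh assms(3)] .

end
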